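(* Let $\lambda$ be a partition of $n$ and $0\le k\le n-1$. Then $$\mathrm{QYT}_{=k+1}(\lambda)=\sum_{m=0}^{k}\binom{n+1}{k-m}(-1)^{k-m}\,\mathrm{SSYT}_{m+1}(\lambda),$$ where both sides denote numbers of tableaux.
   Context: A semistandard Young tableau (SSYT) of shape $\lambda$ is a filling of the Young diagram of $\lambda$ with positive integers weakly increasing along rows and strictly increasing up columns (French convention: rows counted from bottom to top). $\mathrm{SSYT}_{m}(\lambda)$ is the number of SSYT of shape $\lambda$ with all entries at most $m$. A quasi-Yamanouchi tableau (QYT) is an SSYT such that whenever an entry $i\ge2$ appears, some instance of $i$ lies in a strictly higher row than some instance of $i-1$. $\mathrm{QYT}_{=m}(\lambda)$ is the number of QYT of shape $\lambda$ whose largest entry is exactly $m$. *)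

theory Defs
  imports Main
begin

definition is_partition :: "nat list \<Rightarrow> nat \<Rightarrow> bool" where
  "is_partition la n \<longleftrightarrow> sorted_wrt (\<ge>) la \<and> (\<forall>x\<in>set la. 0 < x) \<and> sum_list la = n"

text \<open>Cells of the Young diagram (French convention): (row, column), 0-indexed,
  row 0 is the bottom row, row i has la!i cells.\<close>
definition cells :: "nat list \<Rightarrow> (nat \<times> nat) set" where
  "cells la = {(i, j). i < length la \<and> j < la ! i}"

text \<open>A filling T is an SSYT of shape la. Fillings are functions on nat \<times> nat,
  normalised to 0 outside the diagram so that each tableau is represented once.\<close>
definition ssyt :: "nat list \<Rightarrow> (nat \<times> nat \<Rightarrow> nat) \<Rightarrow> bool" where
  "ssyt la T \<longleftrightarrow>
     (\<forall>c. c \<notin> cells la \<longrightarrow> T c = 0) \<and>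
     (\<forall>c\<in>cells la. 1 \<le> T c) \<and>
     (\<forall>i j j'. (i, j) \<in> cells la \<and> (i, j') \<in> cells la \<and> j < j' \<longrightarrow> T (i, j) \<le> T (i, j')) \<and>
     (\<forall>i i' j. (i, j) \<in> cells la \<and> (i', j) \<in> cells la \<and> i < i' \<longrightarrow> T (i, j) < T (i', j))"

definition SSYT :: "nat \<Rightarrow> nat list \<Rightarrow> nat" where
  "SSYT m la = card {T. ssyt la T \<and> (\<forall>c\<in>cells la. T c \<le> m)}"

definition qyt :: "nat list \<Rightarrow> (nat \<times> nat \<Rightarrow> nat) \<Rightarrow> bool" where
  "qyt la T \<longleftrightarrow> ssyt la T \<and>
     (\<forall>v. 2 \<le> v \<and> (\<exists>c\<in>cells la. T c = v) \<longrightarrow>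
        (\<exists>c\<in>cells la. \<exists>c'\<in>cells la. T c = v \<and> T c' = v - 1 \<and> fst c' < fst c))"

definition QYT_eq :: "nat \<Rightarrow> nat list \<Rightarrow> nat" where
  "QYT_eq m la = card {T. qyt la T \<and> (\<forall>c\<in>cells la. T c \<le> m) \<and> (\<exists>c\<in>cells la. T c = m)}"

end

theory Submission imports Defs "HOL-Computational_Algebra.Formal_Power_Series" "HOL-Library.FuncSet" begin

definition prec :: "(nat \<times> nat \<Rightarrow> nat) \<Rightarrow> nat \<times> nat \<Rightarrow> nat \<times> nat \<Rightarrow> bool" where
  "prec Q c d \<longleftrightarrow> Q c < Q d \<or> (Q c = Q d \<and> snd c < snd d)"

lemma cells_Sigma: "cells la = Sigma {..<length la} (\<lambda>i. {..<la!i})"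
  by (auto simp: cells_def)

lemma finite_cells: "finite (cells la)"
  by (simp add: cells_Sigma)

lemma card_cells: "card (cells la) = sum_list la"
  by (simp add: cells_Sigma sum_list_sum_nth atLeast0LessThan)

lemma cells_snd_bound: "c \<in> cells la \<Longrightarrow> snd c < Suc (sum_list la)"
  using elem_le_sum_list[of "fst c" la] by (auto simp: cells_def)

lemma shape_down:
  assumes "is_partition la n" "(r', b) \<in> cells la" "r < r'"
  shows "(r, b) \<in> cells la"
proof -
  have "sorted_wrt (\<ge>) la" using assms(1) by (simp add: is_partition_def)
  hence "la ! r' \<le> la ! r" using assms(2,3) by (auto simp: cells_def sorted_wrt_iff_nth_less)
  thus ?thesis using assms(2,3) by (auto simp: cells_def)
qed

lemma shape_left: "(r, b) \<in> cells la \<Longrightarrow> a \<le> b \<Longrightarrow> (r, a) \<in> cells la"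
  by (auto simp: cells_def)

lemma ssyt_row: "ssyt la T \<Longrightarrow> (i, j) \<in> cells la \<Longrightarrow> (i, j') \<in> cells la \<Longrightarrow> j < j' \<Longrightarrow> T (i, j) \<le> T (i, j')"
  unfolding ssyt_def by blast

lemma ssyt_col: "ssyt la T \<Longrightarrow> (i, j) \<in> cells la \<Longrightarrow> (i', j) \<in> cells la \<Longrightarrow> i < i' \<Longrightarrow> T (i, j) < T (i', j)"
  unfolding ssyt_def by blast

lemma ssyt_pos: "ssyt la T \<Longrightarrow> c \<in> cells la \<Longrightarrow> 1 \<le> T c"
  unfolding ssyt_def by blast

lemma ssyt_out: "ssyt la T \<Longrightarrow> c \<notin> cells la \<Longrightarrow> T c = 0"
  unfolding ssyt_def by blast

lemma hstrip:
  assumes "is_partition la n" "ssyt la T" "x \<in> cells la" "y \<in> cells la" "T x = T y" "snd x < snd y"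
  shows "fst y \<le> fst x"
proof (rule ccontr)
  assume "\<not> fst y \<le> fst x"
  hence lt: "fst x < fst y" by simp
  obtain r a where x: "x = (r, a)" by (cases x)
  obtain r' b where y: "y = (r', b)" by (cases y)
  have rb: "(r, b) \<in> cells la" using shape_down[OF assms(1), of r' b r] assms(4) lt x y by simp
  have "T (r, a) \<le> T (r, b)" using ssyt_row[OF assms(2), of r a b] assms(3,6) rb x y by simp
  moreover have "T (r, b) < T (r', b)" using ssyt_col[OF assms(2), of r b r'] rb assms(4) lt x y by simp
  ultimately show False using assms(5) x y by simp
qed

lemma ssyt_lower:
  assumes "is_partition la n" "ssyt la T" "c \<in> cells la" "d \<in> cells la" "T d < T c" "snd c < snd d"
  shows "fst d < fst c"
proof (rule ccontr)
  assume "\<not> fst d < fst c"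
  hence le: "fst c \<le> fst d" by simp
  obtain r a where c: "c = (r, a)" by (cases c)
  obtain r' b where d: "d = (r', b)" by (cases d)
  show False
  proof (cases "r = r'")
    case True
    then show False using ssyt_row[OF assms(2), of r a b] assms(3-6) c d by simp
  next
    case False
    hence lt: "r < r'" using le c d by simp
    have rb: "(r, b) \<in> cells la" using shape_down[OF assms(1), of r' b r] assms(4) lt d by simp
    have "T (r, a) \<le> T (r, b)" using ssyt_row[OF assms(2), of r a b] assms(3,6) rb c d by simp
    moreover have "T (r, b) < T (r', b)" using ssyt_col[OF assms(2), of r b r'] rb assms(4) lt d by simp
    ultimately show False using assms(5) c d by simp
  qed
qed

lemma prec_total:
  assumes "ssyt la Q" "c \<in> cells la" "d \<in> cells la" "c \<noteq> d"
  shows "prec Q c d \<or> prec Q d c"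
proof (rule ccontr)
  assume "\<not> (prec Q c d \<or> prec Q d c)"
  hence eq: "Q c = Q d" "snd c = snd d" by (auto simp: prec_def)
  obtain r a where c: "c = (r, a)" by (cases c)
  obtain r' b where d: "d = (r', b)" by (cases d)
  have "r \<noteq> r'" using eq assms(4) c d by auto
  then show False
    using ssyt_col[OF assms(1), of r a r'] ssyt_col[OF assms(1), of r' a r] assms(2,3) eq c d
    by (cases "r < r'") auto
qed

lemma prec_key:
  assumes "snd c < K" "snd d < K"
  shows "prec Q c d \<longleftrightarrow> Q c * K + snd c < Q d * K + snd d"
proof -
  have A: "a * K + x < b * K + y" if "a < b" "x < K" for a b x y :: nat
  proof -
    have "a * K + x < a * K + K" using that by simp
    also have "\<dots> = Suc a * K" by simp
    also have "\<dots> \<le> b * K" using that by (intro mult_right_mono) auto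
    finally show ?thesis by simp
  qed
  show ?thesis unfolding prec_def
    using A[of "Q c" "Q d" "snd c" "snd d"] A[of "Q d" "Q c" "snd d" "snd c"] assms
    by (cases "Q c < Q d"; cases "Q d < Q c") auto
qed


definition emb :: "nat list \<Rightarrow> (nat \<times> nat \<Rightarrow> nat) \<Rightarrow> (nat \<times> nat \<Rightarrow> nat) \<Rightarrow> (nat \<times> nat \<Rightarrow> nat)" where
  "emb la Q B = (\<lambda>c. if c \<in> cells la then Q c + B c - 1 else 0)"

definition monoB :: "nat list \<Rightarrow> (nat \<times> nat \<Rightarrow> nat) \<Rightarrow> (nat \<times> nat \<Rightarrow> nat) \<Rightarrow> bool" where
  "monoB la Q B \<longleftrightarrow> (\<forall>c\<in>cells la. 1 \<le> B c) \<and> (\<forall>c\<in>cells la. \<forall>d\<in>cells la. prec Q c d \<longrightarrow> B c \<le> B d)"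

lemma prec_emb:
  assumes "monoB la Q B" "c \<in> cells la" "d \<in> cells la" "prec Q c d"
  shows "prec (\<lambda>c. Q c + B c - 1) c d"
proof -
  have "B c \<le> B d" "1 \<le> B c" "1 \<le> B d" using assms unfolding monoB_def by auto
  then show ?thesis using assms(4) unfolding prec_def by auto
qed

lemma prec_asym: "prec T c d \<Longrightarrow> \<not> prec T d c"
  by (auto simp: prec_def)

lemma prec_emb_iff:
  assumes "ssyt la Q" "monoB la Q B" "c \<in> cells la" "d \<in> cells la"
  shows "prec Q c d \<longleftrightarrow> prec (\<lambda>c. Q c + B c - 1) c d"
proof
  assume "prec Q c d" thus "prec (\<lambda>c. Q c + B c - 1) c d" using prec_emb assms by blast
next
  assume h: "prec (\<lambda>c. Q c + B c - 1) c d"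
  show "prec Q c d"
  proof (rule ccontr)
    assume n: "\<not> prec Q c d"
    have "c \<noteq> d" using h by (auto simp: prec_def)
    hence "prec Q d c" using prec_total[OF assms(1,3,4)] n by blast
    hence "prec (\<lambda>c. Q c + B c - 1) d c" using prec_emb assms by blast
    thus False using h prec_asym by blast
  qed
qed

lemma qyt_ssyt: "qyt la Q \<Longrightarrow> ssyt la Q" by (simp add: qyt_def)

lemma qyt_down:
  assumes "qyt la Q" "c \<in> cells la" "2 \<le> Q c"
  shows "\<exists>a\<in>cells la. \<exists>b\<in>cells la. Q a = Q c \<and> Q b = Q c - 1 \<and> fst b < fst a"
  using assms unfolding qyt_def by blast

lemma qyt_first:
  assumes "qyt la Q" "c \<in> cells la" "\<forall>d\<in>cells la. \<not> prec Q d c"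
  shows "Q c = 1"
proof (rule ccontr)
  assume "Q c \<noteq> 1"
  moreover have "1 \<le> Q c" using ssyt_pos[OF qyt_ssyt[OF assms(1)] assms(2)] .
  ultimately have "2 \<le> Q c" by simp
  then obtain b where "b \<in> cells la" "Q b = Q c - 1" using qyt_down[OF assms(1,2)] by blast
  moreover have "Q c - 1 < Q c" using \<open>2 \<le> Q c\<close> by simp
  ultimately show False using assms(3) by (auto simp: prec_def)
qed

lemma qyt_step:
  assumes part: "is_partition la n" and q: "qyt la Q" and pc: "p \<in> cells la" "c \<in> cells la"
    and pr: "prec Q p c" and imm: "\<forall>d\<in>cells la. prec Q d c \<longrightarrow> d = p \<or> prec Q d p"
  shows "Q c = Q p + (if fst p < fst c then 1 else 0)"
proof -
  have s: "ssyt la Q" using q by (rule qyt_ssyt)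
  show ?thesis
  proof (cases "Q p = Q c")
    case True
    hence "snd p < snd c" using pr by (auto simp: prec_def)
    hence "fst c \<le> fst p" using hstrip[OF part s pc True] by simp
    thus ?thesis using True by simp
  next
    case False
    hence lt: "Q p < Q c" using pr by (auto simp: prec_def)
    hence "2 \<le> Q c" using ssyt_pos[OF s pc(1)] by simp
    then obtain a b where ab: "a \<in> cells la" "b \<in> cells la" "Q a = Q c" "Q b = Q c - 1" "fst b < fst a"
      using qyt_down[OF q pc(2)] by blast
    have "prec Q b c" using ab lt by (auto simp: prec_def)
    hence "b = p \<or> prec Q b p" using imm ab(2) by blast
    hence bp: "Q p = Q c - 1 \<and> fst p \<le> fst b"
    proof
      assume "b = p" thus ?thesis using ab by simp
    next
      assume h: "prec Q b p"
      hence eqb: "Q b = Q p" using ab(4) lt by (auto simp: prec_def)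
      hence "snd b < snd p" using h by (auto simp: prec_def)
      hence "fst p \<le> fst b" using hstrip[OF part s ab(2) pc(1) eqb] by simp
      thus ?thesis using eqb ab(4) by simp
    qed
    have ac: "fst a \<le> fst c"
    proof (cases "a = c")
      case True thus ?thesis by simp
    next
      case False
      hence "prec Q a c \<or> prec Q c a" using prec_total[OF s ab(1) pc(2)] by blast
      thus ?thesis
      proof
        assume h: "prec Q a c"
        hence "a = p \<or> prec Q a p" using imm ab(1) by blast
        thus ?thesis using ab(3) lt by (auto simp: prec_def)
      next
        assume h: "prec Q c a"
        hence "snd c < snd a" using ab(3) by (auto simp: prec_def)
        thus ?thesis using hstrip[OF part s pc(2) ab(1)] ab(3) by simp
      qed
    qed
    have "fst p < fst c" using bp ab(5) ac by simp
    thus ?thesis using bp \<open>2 \<le> Q c\<close> by simp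
  qed
qed


lemma qyt_unique:
  assumes part: "is_partition la n" and q: "qyt la Q" and q': "qyt la Q'"
    and iff: "\<forall>c\<in>cells la. \<forall>d\<in>cells la. prec Q c d \<longleftrightarrow> prec Q' c d"
  shows "Q = Q'"
proof -
  define K where "K = Suc (sum_list la)"
  define key where "key c = Q c * K + snd c" for c
  have kb: "c \<in> cells la \<Longrightarrow> snd c < K" for c using cells_snd_bound by (simp add: K_def)
  have pk: "c \<in> cells la \<Longrightarrow> d \<in> cells la \<Longrightarrow> prec Q c d \<longleftrightarrow> key c < key d" for c d
    using prec_key[OF kb kb] by (simp add: key_def)
  have s: "ssyt la Q" using q by (rule qyt_ssyt)
  have main: "\<forall>c\<in>cells la. key c = x \<longrightarrow> Q c = Q' c" for x
  proof (induction x rule: less_induct)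
    case (less x)
    show ?case
    proof (intro ballI impI)
      fix c assume c: "c \<in> cells la" and kc: "key c = x"
      show "Q c = Q' c"
      proof (cases "\<exists>d\<in>cells la. prec Q d c")
        case False
        hence "Q c = 1" using qyt_first[OF q c] by blast
        moreover have "Q' c = 1" using qyt_first[OF q' c] False iff c by blast
        ultimately show ?thesis by simp
      next
        case True
        then obtain d0 where d0: "d0 \<in> cells la" "prec Q d0 c" by blast
        obtain p where p: "p \<in> cells la \<and> prec Q p c"
          and pmax: "\<forall>y. y \<in> cells la \<and> prec Q y c \<longrightarrow> key y \<le> key p"
          using ex_has_greatest_nat[of "\<lambda>d. d \<in> cells la \<and> prec Q d c" d0 key "key c"] d0 pk c
          by blast
        have imm: "\<forall>d\<in>cells la. prec Q d c \<longrightarrow> d = p \<or> prec Q d p"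
        proof (intro ballI impI)
          fix d assume d: "d \<in> cells la" "prec Q d c"
          show "d = p \<or> prec Q d p"
          proof (rule ccontr)
            assume "\<not> (d = p \<or> prec Q d p)"
            hence "prec Q p d" using prec_total[OF s d(1)] p by blast
            hence "key p < key d" using pk d p by blast
            moreover have "key d \<le> key p" using pmax d by blast
            ultimately show False by simp
          qed
        qed
        have imm': "\<forall>d\<in>cells la. prec Q' d c \<longrightarrow> d = p \<or> prec Q' d p"
          using imm iff p c by blast
        have "key p < x" using pk p c kc by blast
        hence IH: "Q p = Q' p" using less p by blast
        have "Q c = Q p + (if fst p < fst c then 1 else 0)"
          using qyt_step[OF part q _ c _ imm] p by blast
        moreover have "Q' c = Q' p + (if fst p < fst c then 1 else 0)"
          using qyt_step[OF part q' _ c _ imm'] p iff c by blast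
        ultimately show ?thesis using IH by simp
      qed
    qed
  qed
  show ?thesis
  proof
    fix c show "Q c = Q' c"
      using main ssyt_out[OF s] ssyt_out[OF qyt_ssyt[OF q']] by (cases "c \<in> cells la") auto
  qed
qed


lemma finite_bounded_funs:
  assumes "finite S"
  shows "finite {f. (\<forall>x. x \<notin> S \<longrightarrow> f x = (0::nat)) \<and> (\<forall>x\<in>S. f x \<le> b)}"
proof -
  have "{f. (\<forall>x. x \<notin> S \<longrightarrow> f x = (0::nat)) \<and> (\<forall>x\<in>S. f x \<le> b)}
     \<subseteq> (\<lambda>g x. if x \<in> S then g x else 0) ` (PiE S (\<lambda>_. {..b}))"
  proof
    fix f assume f: "f \<in> {f. (\<forall>x. x \<notin> S \<longrightarrow> f x = (0::nat)) \<and> (\<forall>x\<in>S. f x \<le> b)}"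
    have "f = (\<lambda>x. if x \<in> S then restrict f S x else 0)" using f by auto
    moreover have "restrict f S \<in> PiE S (\<lambda>_. {..b})" using f by auto
    ultimately show "f \<in> (\<lambda>g x. if x \<in> S then g x else 0) ` (PiE S (\<lambda>_. {..b}))" by blast
  qed
  moreover have "finite (PiE S (\<lambda>_. {..b::nat}))" using assms by (intro finite_PiE) auto
  ultimately show ?thesis using finite_subset by blast
qed

definition MB :: "'a set \<Rightarrow> ('a \<Rightarrow> nat) \<Rightarrow> nat \<Rightarrow> ('a \<Rightarrow> nat) set" where
  "MB S key N = {B. (\<forall>x. x \<notin> S \<longrightarrow> B x = 0) \<and> (\<forall>x\<in>S. 1 \<le> B x \<and> B x \<le> N)
      \<and> (\<forall>x\<in>S. \<forall>y\<in>S. key x < key y \<longrightarrow> B x \<le> B y)}"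

lemma finite_MB: "finite S \<Longrightarrow> finite (MB S key N)"
  by (rule finite_subset[OF _ finite_bounded_funs[of S N]]) (auto simp: MB_def)

lemma count_mono:
  assumes "finite S" "inj_on key S"
  shows "card (MB S key N) = (N + card S - 1) choose card S"
  using assms
proof (induction "card S" arbitrary: S N)
  case 0
  hence S: "S = {}" by simp
  have "MB S key N = {\<lambda>_. 0}" by (auto simp: MB_def S)
  thus ?case using S by simp
next
  case (Suc s)
  hence ne: "S \<noteq> {}" by auto
  define x where "x = (SOME x. x \<in> S \<and> key x = Max (key ` S))"
  have "Max (key ` S) \<in> key ` S" using Suc.prems ne by simp
  hence "\<exists>x. x \<in> S \<and> key x = Max (key ` S)" by auto
  hence x: "x \<in> S" "key x = Max (key ` S)" unfolding x_def by (metis (mono_tags, lifting) someI_ex)+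
  have xmax: "y \<in> S \<Longrightarrow> y \<noteq> x \<Longrightarrow> key y < key x" for y
  proof -
    assume y: "y \<in> S" "y \<noteq> x"
    have "key y \<le> key x" using x Suc.prems y by simp
    moreover have "key y \<noteq> key x" using Suc.prems(2) x(1) y unfolding inj_on_def by blast
    ultimately show ?thesis by simp
  qed
  define S' where "S' = S - {x}"
  have cS': "card S' = s" using Suc.hyps(2) x(1) Suc.prems(1) by (simp add: S'_def)
  have fS': "finite S'" "inj_on key S'" using Suc.prems by (auto simp: S'_def inj_on_def)
  have IH: "card (MB S' key M) = (M + s - 1) choose s" for M
    using Suc.hyps(1)[of S' M] cS' fS' by simp
  have fS: "finite S" using Suc.prems by simp
  have cS: "Suc s = card S" using Suc.hyps(2) by simp
  show ?case
  proof (induction N)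
    case 0
    have "MB S key 0 = {}" using x(1) by (auto simp: MB_def)
    thus ?case using cS[symmetric] by simp
  next
    case (Suc N)
    have eq: "MB S key (Suc N) = MB S key N \<union> (\<lambda>B. B(x := Suc N)) ` MB S' key (Suc N)"
    proof (intro equalityI subsetI)
      fix B assume B: "B \<in> MB S key (Suc N)"
      show "B \<in> MB S key N \<union> (\<lambda>B. B(x := Suc N)) ` MB S' key (Suc N)"
      proof (cases "B x \<le> N")
        case True
        have "\<forall>y\<in>S. B y \<le> N"
        proof
          fix y assume y: "y \<in> S"
          show "B y \<le> N"
          proof (cases "y = x")
            case True thus ?thesis using \<open>B x \<le> N\<close> by simp
          next
            case False
            hence "B y \<le> B x" using B xmax[OF y False] x(1) y by (auto simp: MB_def)
            thus ?thesis using \<open>B x \<le> N\<close> by simp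
          qed
        qed
        hence "B \<in> MB S key N" using B by (auto simp: MB_def)
        thus ?thesis by blast
      next
        case False
        hence "B x = Suc N" using B x(1) by (auto simp: MB_def)
        hence "B = (B(x := 0))(x := Suc N)" by auto
        moreover have "B(x := 0) \<in> MB S' key (Suc N)" using B by (auto simp: MB_def S'_def)
        ultimately show ?thesis by blast
      qed
    next
      fix B assume B: "B \<in> MB S key N \<union> (\<lambda>B. B(x := Suc N)) ` MB S' key (Suc N)"
      show "B \<in> MB S key (Suc N)"
      proof (cases "B \<in> MB S key N")
        case True thus ?thesis by (auto simp: MB_def)
      next
        case False
        then obtain B' where B': "B' \<in> MB S' key (Suc N)" "B = B'(x := Suc N)" using B by blast
        show ?thesis unfolding MB_def
        proof (intro CollectI conjI allI ballI impI)
          fix y assume "y \<notin> S" thus "B y = 0" using B' x(1) by (auto simp: MB_def S'_def)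
        next
          fix y assume "y \<in> S" thus "1 \<le> B y" "B y \<le> Suc N" using B' by (auto simp: MB_def S'_def)
        next
          fix y z assume yz: "y \<in> S" "z \<in> S" "key y < key z"
          show "B y \<le> B z"
          proof (cases "z = x")
            case True
            hence "y \<noteq> x" using yz by auto
            thus ?thesis using True B' yz by (auto simp: MB_def S'_def)
          next
            case False
            have "y \<noteq> x" using xmax[OF yz(2) False] yz by auto
            thus ?thesis using False B' yz by (auto simp: MB_def S'_def)
          qed
        qed
      qed
    qed
    have disj: "MB S key N \<inter> (\<lambda>B. B(x := Suc N)) ` MB S' key (Suc N) = {}"
      using x(1) by (auto simp: MB_def)
    have inj: "inj_on (\<lambda>B. B(x := Suc N)) (MB S' key (Suc N))"
    proof (rule inj_onI)
      fix B1 B2 assume b: "B1 \<in> MB S' key (Suc N)" "B2 \<in> MB S' key (Suc N)" "B1(x := Suc N) = B2(x := Suc N)"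
      have "B1 x = 0" "B2 x = 0" using b(1,2) by (auto simp: MB_def S'_def)
      thus "B1 = B2" using b(3) by (metis fun_upd_triv fun_upd_upd)
    qed
    have "card (MB S key (Suc N)) = card (MB S key N) + card (MB S' key (Suc N))"
      unfolding eq using disj inj fS
      by (subst card_Un_disjoint) (auto simp: finite_MB fS' card_image)
    also have "\<dots> = ((N + s) choose (Suc s)) + ((N + s) choose s)"
      using Suc.IH IH[of "Suc N"] cS[symmetric] by simp
    also have "\<dots> = (Suc N + card S - 1) choose card S"
      using cS[symmetric] by simp
    finally show ?case .
  qed
qed


lemma coverage:
  assumes part: "is_partition la n"
  shows "ssyt la T \<Longrightarrow> \<exists>Q B. qyt la Q \<and> monoB la Q B \<and> (\<forall>c\<in>cells la. T c = Q c + B c - 1)"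
proof (induction "sum T (cells la)" arbitrary: T rule: less_induct)
  case less
  have sT: "ssyt la T" by fact
  show ?case
  proof (cases "qyt la T")
    case True
    have "monoB la T (\<lambda>_. 1)" by (simp add: monoB_def)
    thus ?thesis using True by force
  next
    case False
    then obtain v c0 where v: "2 \<le> v" "c0 \<in> cells la" "T c0 = v"
      and nob: "\<not> (\<exists>a\<in>cells la. \<exists>b\<in>cells la. T a = v \<and> T b = v - 1 \<and> fst b < fst a)"
      using sT unfolding qyt_def by blast
    define T' where "T' = (\<lambda>c. if v \<le> T c then T c - 1 else T c)"
    have sT': "ssyt la T'"
      unfolding ssyt_def
    proof (intro conjI allI impI ballI)
      fix c assume "c \<notin> cells la" thus "T' c = 0" using ssyt_out[OF sT] v(1) by (simp add: T'_def)
    next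
      fix c assume "c \<in> cells la" thus "1 \<le> T' c" using ssyt_pos[OF sT] v(1) by (auto simp: T'_def)
    next
      fix i j j' assume h: "(i, j) \<in> cells la \<and> (i, j') \<in> cells la \<and> j < j'"
      hence "T (i, j) \<le> T (i, j')" using ssyt_row[OF sT] by blast
      thus "T' (i, j) \<le> T' (i, j')" by (auto simp: T'_def)
    next
      fix i i' j assume h: "(i, j) \<in> cells la \<and> (i', j) \<in> cells la \<and> i < i'"
      hence lt: "T (i, j) < T (i', j)" using ssyt_col[OF sT] by blast
      have "\<not> (T (i', j) = v \<and> T (i, j) = v - 1)" using nob h by force
      thus "T' (i, j) < T' (i', j)" using lt v(1) unfolding T'_def by (cases "T (i', j) = v") auto
    qed
    have "sum T' (cells la) < sum T (cells la)"
    proof (rule sum_strict_mono_ex1[OF finite_cells])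
      show "\<forall>x\<in>cells la. T' x \<le> T x" by (simp add: T'_def)
      show "\<exists>a\<in>cells la. T' a < T a" using v by (intro bexI[of _ c0]) (auto simp: T'_def)
    qed
    then obtain Q B' where Q: "qyt la Q" and mB': "monoB la Q B'"
      and TQ: "\<forall>c\<in>cells la. T' c = Q c + B' c - 1"
      using less.hyps sT' by blast
    define B where "B = (\<lambda>c. B' c + (if v \<le> T c then 1 else 0))"
    have sQ: "ssyt la Q" using Q by (rule qyt_ssyt)
    have "monoB la Q B"
      unfolding monoB_def
    proof (intro conjI ballI impI)
      fix c assume "c \<in> cells la" thus "1 \<le> B c" using mB' by (auto simp: monoB_def B_def)
    next
      fix c d assume cd: "c \<in> cells la" "d \<in> cells la" "prec Q c d"
      have le: "B' c \<le> B' d" using mB' cd by (auto simp: monoB_def)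
      have pT': "prec (\<lambda>c. Q c + B' c - 1) c d" using prec_emb[OF mB' cd] .
      hence pT'': "prec T' c d" using TQ cd unfolding prec_def by simp
      have "\<not> (v \<le> T c \<and> \<not> v \<le> T d)"
      proof
        assume h: "v \<le> T c \<and> \<not> v \<le> T d"
        hence "T' c = T c - 1" "T' d = T d" by (auto simp: T'_def)
        hence eqs: "T c = v" "T d = v - 1" "snd c < snd d" using pT'' h unfolding prec_def by auto
        hence "fst d < fst c" using ssyt_lower[OF part sT cd(1,2)] v(1) by simp
        thus False using nob cd eqs by blast
      qed
      thus "B c \<le> B d" using le by (auto simp: B_def)
    qed
    moreover have "\<forall>c\<in>cells la. T c = Q c + B c - 1"
    proof
      fix c assume c: "c \<in> cells la"
      have "1 \<le> Q c" "1 \<le> B' c" using ssyt_pos[OF sQ c] mB' c by (auto simp: monoB_def)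
      thus "T c = Q c + B c - 1" using TQ c ssyt_pos[OF sT c] by (auto simp: B_def T'_def split: if_splits)
    qed
    ultimately show ?thesis using Q by blast
  qed
qed


definition QY :: "nat \<Rightarrow> nat list \<Rightarrow> (nat \<times> nat \<Rightarrow> nat) set" where
  "QY j la = {Q. qyt la Q \<and> (\<forall>c\<in>cells la. Q c \<le> j) \<and> (\<exists>c\<in>cells la. Q c = j)}"

definition SS :: "nat \<Rightarrow> nat list \<Rightarrow> (nat \<times> nat \<Rightarrow> nat) set" where
  "SS m la = {T. ssyt la T \<and> (\<forall>c\<in>cells la. T c \<le> m)}"

definition Bset :: "nat list \<Rightarrow> (nat \<times> nat \<Rightarrow> nat) \<Rightarrow> nat \<Rightarrow> (nat \<times> nat \<Rightarrow> nat) set" where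
  "Bset la Q N = {B. (\<forall>c. c \<notin> cells la \<longrightarrow> B c = 0) \<and> (\<forall>c\<in>cells la. 1 \<le> B c \<and> B c \<le> N)
      \<and> (\<forall>c\<in>cells la. \<forall>d\<in>cells la. prec Q c d \<longrightarrow> B c \<le> B d)}"

lemma Bset_monoB: "B \<in> Bset la Q N \<Longrightarrow> monoB la Q B"
  by (auto simp: Bset_def monoB_def)

lemma finite_Bset: "finite (Bset la Q N)"
  by (rule finite_subset[OF _ finite_bounded_funs[OF finite_cells, of la N]]) (auto simp: Bset_def)

lemma Bset_card:
  assumes "ssyt la Q"
  shows "card (Bset la Q N) = (N + sum_list la - 1) choose sum_list la"
proof -
  define K where "K = Suc (sum_list la)"
  define key where "key c = Q c * K + snd c" for c
  have kb: "c \<in> cells la \<Longrightarrow> snd c < K" for c using cells_snd_bound by (simp add: K_def)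
  have pk: "c \<in> cells la \<Longrightarrow> d \<in> cells la \<Longrightarrow> prec Q c d \<longleftrightarrow> key c < key d" for c d
    using prec_key[OF kb kb] by (simp add: key_def)
  have "Bset la Q N = MB (cells la) key N"
    unfolding Bset_def MB_def using pk by blast
  moreover have "inj_on key (cells la)"
  proof (rule inj_onI)
    fix c d assume cd: "c \<in> cells la" "d \<in> cells la" "key c = key d"
    show "c = d"
    proof (rule ccontr)
      assume "c \<noteq> d"
      hence "prec Q c d \<or> prec Q d c" using prec_total[OF assms cd(1,2)] by blast
      thus False using pk cd by auto
    qed
  qed
  ultimately show ?thesis using count_mono[OF finite_cells] card_cells by simp
qed

lemma emb_cells: "c \<in> cells la \<Longrightarrow> emb la Q B c = Q c + B c - 1"
  by (simp add: emb_def)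

lemma prec_emb_cells:
  "c \<in> cells la \<Longrightarrow> d \<in> cells la \<Longrightarrow> prec (emb la Q B) c d \<longleftrightarrow> prec (\<lambda>c. Q c + B c - 1) c d"
  by (simp add: prec_def emb_def)

lemma emb_in_SS:
  assumes Q: "Q \<in> QY j la" and B: "B \<in> Bset la Q (m + 1 - j)"
  shows "emb la Q B \<in> SS m la"
proof -
  have sQ: "ssyt la Q" using Q by (auto simp: QY_def qyt_def)
  have mB: "monoB la Q B" using Bset_monoB[OF B] .
  have pe: "c \<in> cells la \<Longrightarrow> d \<in> cells la \<Longrightarrow> prec Q c d \<Longrightarrow> prec (emb la Q B) c d" for c d
    using prec_emb[OF mB] prec_emb_cells by blast
  have "ssyt la (emb la Q B)"
    unfolding ssyt_def
  proof (intro conjI allI impI ballI)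
    fix c assume "c \<notin> cells la" thus "emb la Q B c = 0" by (simp add: emb_def)
  next
    fix c assume c: "c \<in> cells la"
    thus "1 \<le> emb la Q B c" using ssyt_pos[OF sQ c] mB by (auto simp: emb_def monoB_def)
  next
    fix i j1 j2 assume h: "(i, j1) \<in> cells la \<and> (i, j2) \<in> cells la \<and> j1 < j2"
    have "Q (i, j1) \<le> Q (i, j2)" using ssyt_row[OF sQ] h by blast
    hence "prec Q (i, j1) (i, j2)" using h by (auto simp: prec_def)
    hence "prec (emb la Q B) (i, j1) (i, j2)" using pe h by blast
    thus "emb la Q B (i, j1) \<le> emb la Q B (i, j2)" by (auto simp: prec_def)
  next
    fix i i' j1 assume h: "(i, j1) \<in> cells la \<and> (i', j1) \<in> cells la \<and> i < i'"
    have "Q (i, j1) < Q (i', j1)" using ssyt_col[OF sQ] h by blast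
    hence "prec Q (i, j1) (i', j1)" using h by (auto simp: prec_def)
    hence "prec (emb la Q B) (i, j1) (i', j1)" using pe h by blast
    thus "emb la Q B (i, j1) < emb la Q B (i', j1)" by (auto simp: prec_def)
  qed
  moreover have "\<forall>c\<in>cells la. emb la Q B c \<le> m"
  proof
    fix c assume c: "c \<in> cells la"
    have "Q c \<le> j" using Q c by (auto simp: QY_def)
    moreover have "1 \<le> B c" "B c \<le> m + 1 - j" using B c by (auto simp: Bset_def)
    ultimately show "emb la Q B c \<le> m" using c by (simp add: emb_def)
  qed
  ultimately show ?thesis by (simp add: SS_def)
qed

lemma emb_inj: "inj_on (emb la Q) (Bset la Q N)"
proof (rule inj_onI)
  fix B1 B2 assume b: "B1 \<in> Bset la Q N" "B2 \<in> Bset la Q N" "emb la Q B1 = emb la Q B2"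
  show "B1 = B2"
  proof
    fix c show "B1 c = B2 c"
    proof (cases "c \<in> cells la")
      case True
      have "emb la Q B1 c = emb la Q B2 c" using b(3) by simp
      moreover have "1 \<le> B1 c" "1 \<le> B2 c" using b(1,2) True by (auto simp: Bset_def)
      ultimately show ?thesis using True by (simp add: emb_def)
    next
      case False
      have "B1 c = 0" "B2 c = 0" using b(1,2) False unfolding Bset_def mem_Collect_eq by blast+
      thus ?thesis by simp
    qed
  qed
qed

lemma fiber_disj:
  assumes part: "is_partition la n" and q: "qyt la Q" and q': "qyt la Q'"
    and B: "B \<in> Bset la Q N" and B': "B' \<in> Bset la Q' N'" and eq: "emb la Q B = emb la Q' B'"
  shows "Q = Q'"
proof (rule qyt_unique[OF part q q'], intro ballI)
  fix c d assume cd: "c \<in> cells la" "d \<in> cells la"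
  have "prec Q c d \<longleftrightarrow> prec (emb la Q B) c d"
    using prec_emb_iff[OF qyt_ssyt[OF q] Bset_monoB[OF B] cd] prec_emb_cells[OF cd] by blast
  also have "\<dots> \<longleftrightarrow> prec Q' c d"
    unfolding eq
    using prec_emb_iff[OF qyt_ssyt[OF q'] Bset_monoB[OF B'] cd] prec_emb_cells[OF cd] by blast
  finally show "prec Q c d \<longleftrightarrow> prec Q' c d" .
qed


lemma decomp:
  assumes part: "is_partition la n" and n1: "1 \<le> n"
  shows "SS m la = (\<Union>j\<in>{1..m}. \<Union>Q\<in>QY j la. emb la Q ` Bset la Q (m + 1 - j))"
proof (intro equalityI subsetI)
  fix T assume T: "T \<in> (\<Union>j\<in>{1..m}. \<Union>Q\<in>QY j la. emb la Q ` Bset la Q (m + 1 - j))"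
  thus "T \<in> SS m la" using emb_in_SS by blast
next
  fix T assume T: "T \<in> SS m la"
  hence sT: "ssyt la T" and Tm: "\<forall>c\<in>cells la. T c \<le> m" by (auto simp: SS_def)
  obtain Q B where q: "qyt la Q" and mB: "monoB la Q B" and TQ: "\<forall>c\<in>cells la. T c = Q c + B c - 1"
    using coverage[OF part sT] by blast
  have sQ: "ssyt la Q" using q by (rule qyt_ssyt)
  have "card (cells la) = n" using card_cells[of la] part unfolding is_partition_def by simp
  hence ne: "cells la \<noteq> {}" using n1 by (metis card.empty not_one_le_zero)
  define j where "j = Max (Q ` cells la)"
  have "j \<in> Q ` cells la" unfolding j_def using ne finite_cells by simp
  then obtain d where d: "d \<in> cells la" "Q d = j" by auto
  have Qj: "\<forall>c\<in>cells la. Q c \<le> j" unfolding j_def using finite_cells by simp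
  have B1: "\<forall>c\<in>cells la. 1 \<le> B c" using mB by (simp add: monoB_def)
  have j1: "1 \<le> j" using ssyt_pos[OF sQ d(1)] d by simp
  have Bd: "1 \<le> B d" "T d = j + B d - 1" "T d \<le> m" using Tm TQ d B1 by auto
  have jm: "j \<le> m" using Bd by simp
  have QY: "Q \<in> QY j la" unfolding QY_def mem_Collect_eq using q Qj d by blast
  define B0 where "B0 = (\<lambda>c. if c \<in> cells la then B c else 0)"
  have "B0 \<in> Bset la Q (m + 1 - j)"
    unfolding Bset_def
  proof (intro CollectI conjI allI impI ballI)
    fix c assume "c \<notin> cells la" thus "B0 c = 0" by (simp add: B0_def)
  next
    fix c assume c: "c \<in> cells la"
    show "1 \<le> B0 c" using B1 c by (simp add: B0_def)
    show "B0 c \<le> m + 1 - j"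
    proof (cases "prec Q d c")
      case True
      hence "Q c = j" using Qj c d by (auto simp: prec_def)
      moreover have "1 \<le> B c" "T c = Q c + B c - 1" "T c \<le> m" using Tm TQ c B1 by auto
      ultimately show ?thesis using c by (simp add: B0_def)
    next
      case False
      hence "c = d \<or> prec Q c d" using prec_total[OF sQ c d(1)] by blast
      hence "B c \<le> B d" using mB c d by (auto simp: monoB_def)
      moreover have "B d \<le> m + 1 - j" using Bd by simp
      ultimately show ?thesis using c by (simp add: B0_def)
    qed
  next
    fix c e assume "c \<in> cells la" "e \<in> cells la" "prec Q c e"
    thus "B0 c \<le> B0 e" using mB by (simp add: B0_def monoB_def)
  qed
  moreover have "T = emb la Q B0"
  proof
    fix c show "T c = emb la Q B0 c"
      using TQ ssyt_out[OF sT] by (cases "c \<in> cells la") (auto simp: emb_def B0_def)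
  qed
  ultimately have "T \<in> emb la Q ` Bset la Q (m + 1 - j)" by blast
  hence "T \<in> (\<Union>Q\<in>QY j la. emb la Q ` Bset la Q (m + 1 - j))" using QY by (rule UN_I[rotated])
  thus "T \<in> (\<Union>j\<in>{1..m}. \<Union>Q\<in>QY j la. emb la Q ` Bset la Q (m + 1 - j))"
    using j1 jm by (intro UN_I[of j]) auto
qed

lemma finite_QY: "finite (QY j la)"
  by (rule finite_subset[OF _ finite_bounded_funs[OF finite_cells, of la j]])
     (use ssyt_out qyt_ssyt in \<open>unfold QY_def, blast\<close>)

lemma card_SS:
  assumes part: "is_partition la n" and n1: "1 \<le> n"
  shows "card (SS m la) = (\<Sum>j=1..m. card (QY j la) * ((m - j + n) choose n))"
proof -
  have sl: "sum_list la = n" using part by (simp add: is_partition_def)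
  have fib: "card (emb la Q ` Bset la Q (m + 1 - j)) = (m - j + n) choose n"
    if "j \<in> {1..m}" "Q \<in> QY j la" for j Q
  proof -
    have "ssyt la Q" using that by (auto simp: QY_def qyt_def)
    hence "card (Bset la Q (m + 1 - j)) = (m + 1 - j + n - 1) choose n" using Bset_card sl by simp
    moreover have "m + 1 - j + n - 1 = m - j + n" using that by auto
    ultimately show ?thesis using card_image[OF emb_inj] by simp
  qed
  have inner: "card (\<Union>Q\<in>QY j la. emb la Q ` Bset la Q (m + 1 - j)) = card (QY j la) * ((m - j + n) choose n)"
    if j: "j \<in> {1..m}" for j
  proof -
    have "card (\<Union>Q\<in>QY j la. emb la Q ` Bset la Q (m + 1 - j)) = (\<Sum>Q\<in>QY j la. card (emb la Q ` Bset la Q (m + 1 - j)))"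
    proof (rule card_UN_disjoint)
      show "finite (QY j la)" by (rule finite_QY)
      show "\<forall>Q\<in>QY j la. finite (emb la Q ` Bset la Q (m + 1 - j))" by (simp add: finite_Bset)
      show "\<forall>Q\<in>QY j la. \<forall>Q'\<in>QY j la. Q \<noteq> Q' \<longrightarrow> emb la Q ` Bset la Q (m + 1 - j) \<inter> emb la Q' ` Bset la Q' (m + 1 - j) = {}"
      proof (intro ballI impI)
        fix Q Q' assume QQ: "Q \<in> QY j la" "Q' \<in> QY j la" "Q \<noteq> Q'"
        have "qyt la Q" "qyt la Q'" using QQ by (auto simp: QY_def)
        thus "emb la Q ` Bset la Q (m + 1 - j) \<inter> emb la Q' ` Bset la Q' (m + 1 - j) = {}"
          using fiber_disj[OF part] QQ(3) by blast
      qed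
    qed
    also have "\<dots> = (\<Sum>Q\<in>QY j la. (m - j + n) choose n)" using fib j by simp
    finally show ?thesis by simp
  qed
  have "card (SS m la) = card (\<Union>j\<in>{1..m}. \<Union>Q\<in>QY j la. emb la Q ` Bset la Q (m + 1 - j))"
    using decomp[OF part n1] by simp
  also have "\<dots> = (\<Sum>j\<in>{1..m}. card (\<Union>Q\<in>QY j la. emb la Q ` Bset la Q (m + 1 - j)))"
  proof (rule card_UN_disjoint)
    show "finite {1..m}" by simp
    show "\<forall>j\<in>{1..m}. finite (\<Union>Q\<in>QY j la. emb la Q ` Bset la Q (m + 1 - j))"
      by (simp add: finite_QY finite_Bset)
    show "\<forall>j\<in>{1..m}. \<forall>j'\<in>{1..m}. j \<noteq> j' \<longrightarrow> (\<Union>Q\<in>QY j la. emb la Q ` Bset la Q (m + 1 - j)) \<inter> (\<Union>Q\<in>QY j' la. emb la Q ` Bset la Q (m + 1 - j')) = {}"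
    proof (intro ballI impI)
      fix j j' assume jj: "j \<in> {1..m}" "j' \<in> {1..m}" "j \<noteq> j'"
      show "(\<Union>Q\<in>QY j la. emb la Q ` Bset la Q (m + 1 - j)) \<inter> (\<Union>Q\<in>QY j' la. emb la Q ` Bset la Q (m + 1 - j')) = {}"
      proof (rule ccontr)
        assume "\<not> ?thesis"
        then obtain Q Q' B B' where QQ: "Q \<in> QY j la" "Q' \<in> QY j' la" "B \<in> Bset la Q (m + 1 - j)"
          "B' \<in> Bset la Q' (m + 1 - j')" "emb la Q B = emb la Q' B'" by blast
        have qq: "qyt la Q" "qyt la Q'" using QQ(1,2) unfolding QY_def mem_Collect_eq by blast+
        have "Q = Q'" using fiber_disj[OF part qq QQ(3,4,5)] .
        then obtain c c' where "c \<in> cells la" "Q c = j" "c' \<in> cells la" "Q c' = j'"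
          "\<forall>c\<in>cells la. Q c \<le> j" "\<forall>c\<in>cells la. Q c \<le> j'"
          using QQ(1,2) unfolding QY_def mem_Collect_eq by blast
        hence "j = j'" by (metis le_antisym)
        thus False using jj by simp
      qed
    qed
  qed
  also have "\<dots> = (\<Sum>j=1..m. card (QY j la) * ((m - j + n) choose n))"
    by (rule sum.cong[OF refl], erule inner)
  finally show ?thesis .
qed

lemma binom_ident_real:
  "(\<Sum>t=0..s. (-1::real)^t * of_nat ((n+1) choose t) * of_nat ((n + (s-t)) choose n)) = (if s = 0 then 1 else 0)"
proof -
  have e: "of_nat ((n + (s-t)) choose n) = (-1::real)^(s-t) * ((-(of_nat n + 1)) gchoose (s-t))" for t
  proof -
    have "(n + (s-t)) choose n = (n + (s-t)) choose (s-t)"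
      by (metis add_diff_cancel_left' binomial_symmetric le_add2 add.commute)
    hence "of_nat ((n + (s-t)) choose n) = ((of_nat n + of_nat (s-t)) gchoose (s-t) :: real)"
      by (simp add: binomial_gbinomial)
    also have "\<dots> = (-1)^(s-t) * ((-(of_nat n + 1)) gchoose (s-t))"
    proof -
      have "((-(of_nat n + 1)) gchoose (s-t)) = (-1::real)^(s-t) * ((of_nat n + 1 + of_nat (s-t) - 1) gchoose (s-t))"
        by (rule gbinomial_minus)
      moreover have "(-1::real)^(s-t) * (-1)^(s-t) = 1" by (simp add: power_mult_distrib[symmetric])
      ultimately show ?thesis by (simp add: mult.assoc[symmetric])
    qed
    finally show ?thesis .
  qed
  have "(\<Sum>t=0..s. (-1::real)^t * of_nat ((n+1) choose t) * of_nat ((n + (s-t)) choose n))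
     = (\<Sum>t=0..s. (-1)^s * ((of_nat (n+1) gchoose t) * ((-(of_nat n + 1)) gchoose (s-t))))"
  proof (rule sum.cong[OF refl])
    fix t assume "t \<in> {0..s}"
    hence "(-1::real)^t * (-1)^(s-t) = (-1)^s" by (simp add: power_add[symmetric])
    thus "(-1::real)^t * of_nat ((n+1) choose t) * of_nat ((n + (s-t)) choose n) =
       (-1)^s * ((of_nat (n+1) gchoose t) * ((-(of_nat n + 1)) gchoose (s-t)))"
    proof -
      have "(-1::real)^t * of_nat ((n+1) choose t) * of_nat ((n + (s-t)) choose n) =
        ((-1)^t * (-1)^(s-t)) * (of_nat ((n+1) choose t) * ((-(of_nat n + 1)) gchoose (s-t)))"
        unfolding e by (simp only: ac_simps)
      then show ?thesis unfolding binomial_gbinomial using \<open>(-1::real)^t * (-1)^(s-t) = (-1)^s\<close> by simp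
    qed
  qed
  also have "\<dots> = (-1)^s * ((of_nat (n+1) + (-(of_nat n + 1))) gchoose s)"
    by (simp add: sum_distrib_left[symmetric] gbinomial_Vandermonde)
  also have "\<dots> = (if s = 0 then 1 else 0)" by (simp add: gbinomial_0_left)
  finally show ?thesis .
qed


lemma binom_ident_int:
  "(\<Sum>t=0..s. (-1::int)^t * int ((n+1) choose t) * int ((n + (s-t)) choose n)) = (if s = 0 then 1 else 0)"
proof -
  have "real_of_int (\<Sum>t=0..s. (-1::int)^t * int ((n+1) choose t) * int ((n + (s-t)) choose n))
     = real_of_int (if s = 0 then 1 else 0)"
    using binom_ident_real[where s=s and n=n] by simp
  thus ?thesis by (simp only: of_int_eq_iff)
qed

lemma inner_ident:
  assumes j: "j \<in> {1..k+1}"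
  shows "(\<Sum>m=0..k. (if j \<le> m + 1 then (-1::int)^(k-m) * int ((n+1) choose (k-m)) * int ((m + 1 - j + n) choose n) else 0))
    = (if j = k + 1 then 1 else 0)"
proof -
  define s where "s = k + 1 - j"
  define g where "g t = (-1::int)^t * int ((n+1) choose t) * int ((n + (s-t)) choose n)" for t
  define h where "h t = (if t \<le> s then g t else 0)" for t
  have "(\<Sum>m=0..k. (if j \<le> m + 1 then (-1::int)^(k-m) * int ((n+1) choose (k-m)) * int ((m + 1 - j + n) choose n) else 0))
      = (\<Sum>m=0..k. h (k - m))"
  proof (rule sum.cong[OF refl])
    fix m assume m: "m \<in> {0..k}"
    show "(if j \<le> m + 1 then (-1::int)^(k-m) * int ((n+1) choose (k-m)) * int ((m + 1 - j + n) choose n) else 0) = h (k - m)"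
    proof (cases "j \<le> m + 1")
      case True
      hence "k - m \<le> s" "m + 1 - j + n = n + (s - (k - m))" using m j by (auto simp: s_def)
      thus ?thesis using True by (simp add: h_def g_def)
    next
      case False
      hence "\<not> k - m \<le> s" using m j by (auto simp: s_def)
      thus ?thesis using False by (simp add: h_def)
    qed
  qed
  also have "\<dots> = (\<Sum>t=0..k. h t)"
    using sum.atLeastAtMost_rev[of "\<lambda>t. h t" 0 k] by simp
  also have "\<dots> = (\<Sum>t\<in>{t\<in>{0..k}. t \<le> s}. g t)"
    unfolding h_def by (rule sum.inter_filter[symmetric]) simp
  also have "{t\<in>{0..k}. t \<le> s} = {0..s}" using j by (auto simp: s_def)
  also have "(\<Sum>t\<in>{0..s}. g t) = (if s = 0 then 1 else 0)"
    unfolding g_def by (rule binom_ident_int)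
  also have "\<dots> = (if j = k + 1 then 1 else 0)" using j by (auto simp: s_def)
  finally show ?thesis .
qed

theorem mainTheorem4:
  fixes la :: "nat list" and n k :: nat
  assumes "is_partition la n" and "k \<le> n - 1" and "1 \<le> n"
  shows "int (QYT_eq (k + 1) la) =
    (\<Sum>m = 0..k. int ((n + 1) choose (k - m)) * (-1) ^ (k - m) * int (SSYT (m + 1) la))"
proof -
  define q where "q j = int (card (QY j la))" for j
  have A: "int (SSYT (m + 1) la) = (\<Sum>j\<in>{1..k+1}. (if j \<le> m + 1 then q j * int ((m + 1 - j + n) choose n) else 0))"
    if m: "m \<le> k" for m
  proof -
    have "SSYT (m + 1) la = card (SS (m + 1) la)" by (simp add: SSYT_def SS_def)
    hence "int (SSYT (m + 1) la) = (\<Sum>j=1..m+1. q j * int ((m + 1 - j + n) choose n))"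
      using card_SS[OF assms(1,3), of "m + 1"] by (simp add: q_def)
    also have "{1..m+1} = {j\<in>{1..k+1}. j \<le> m + 1}" using m by auto
    also have "(\<Sum>j\<in>{j\<in>{1..k+1}. j \<le> m + 1}. q j * int ((m + 1 - j + n) choose n))
        = (\<Sum>j\<in>{1..k+1}. (if j \<le> m + 1 then q j * int ((m + 1 - j + n) choose n) else 0))"
      by (rule sum.inter_filter) simp
    finally show ?thesis .
  qed
  have "(\<Sum>m = 0..k. int ((n + 1) choose (k - m)) * (-1) ^ (k - m) * int (SSYT (m + 1) la))
      = (\<Sum>m = 0..k. \<Sum>j\<in>{1..k+1}. q j * (if j \<le> m + 1 then (-1::int)^(k-m) * int ((n+1) choose (k-m)) * int ((m + 1 - j + n) choose n) else 0))"
  proof (rule sum.cong[OF refl])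
    fix m assume "m \<in> {0..k}"
    hence "m \<le> k" by simp
    thus "int ((n + 1) choose (k - m)) * (-1) ^ (k - m) * int (SSYT (m + 1) la) =
       (\<Sum>j\<in>{1..k+1}. q j * (if j \<le> m + 1 then (-1::int)^(k-m) * int ((n+1) choose (k-m)) * int ((m + 1 - j + n) choose n) else 0))"
      unfolding A[OF \<open>m \<le> k\<close>] sum_distrib_left by (intro sum.cong refl) (simp add: algebra_simps)
  qed
  also have "\<dots> = (\<Sum>j\<in>{1..k+1}. \<Sum>m = 0..k. q j * (if j \<le> m + 1 then (-1::int)^(k-m) * int ((n+1) choose (k-m)) * int ((m + 1 - j + n) choose n) else 0))"
    by (rule sum.swap)
  also have "\<dots> = (\<Sum>j\<in>{1..k+1}. q j * (if j = k + 1 then 1 else 0))"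
    by (rule sum.cong[OF refl]) (simp only: sum_distrib_left[symmetric] inner_ident)
  also have "\<dots> = q (k + 1)"
    by (simp add: sum.delta'[of "{1..k+1}" "k+1"] if_distrib cong: if_cong)
  finally show ?thesis by (simp add: q_def QYT_eq_def QY_def)
qed

end
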